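(* Let $f$ be an L-additive arithmetic function with $h_f(n)\neq0$ for all $n\ge1$. Then for every positive integer $n$, $$\Lambda_f(n)=\sum_{d\mid n}\mu\!\left(\frac nd\right)\frac{f(d)}{h_f(d)}=-\sum_{d\mid n}\frac{\mu(d)f(d)}{h_f(d)},$$ i.e. $\Lambda_f=\mu\ast\frac{f}{h_f}=-\,\mathbf 1\ast\frac{\mu f}{h_f}$.
   Context: An arithmetic function $f$ is L-additive if there is a completely multiplicative arithmetic function $h_f$ such that $f(mn)=f(m)h_f(n)+f(n)h_f(m)$ for all positive integers $m,n$. The generalized von Mangoldt function of $f$ is $\Lambda_f(n)=f(p)/h_f(p)$ if $n=p^k$ for some prime $p$ and integer $k\ge1$, and $\Lambda_f(n)=0$ otherwise. $\mu$ is the Möbius function, $\mathbf 1(n)=1$, and the Dirichlet convolution is $(u\ast v)(n)=\sum_{d\mid n}u(d)v(n/d)$; quotients/products of functions are pointwise. *)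

theory Defs
  imports "HOL-Number_Theory.Number_Theory" "HOL-Computational_Algebra.Squarefree" Complex_Main
begin

(* Arithmetic functions are modelled as nat \<Rightarrow> complex; only values at n \<ge> 1 matter. *)

definition completely_multiplicative :: "(nat \<Rightarrow> complex) \<Rightarrow> bool" where
  "completely_multiplicative h \<longleftrightarrow> h 1 = 1 \<and> (\<forall>m n. m \<ge> 1 \<longrightarrow> n \<ge> 1 \<longrightarrow> h (m * n) = h m * h n)"

definition L_additive_with :: "(nat \<Rightarrow> complex) \<Rightarrow> (nat \<Rightarrow> complex) \<Rightarrow> bool" where
  "L_additive_with f h \<longleftrightarrow> completely_multiplicative h \<and>
     (\<forall>m n. m \<ge> 1 \<longrightarrow> n \<ge> 1 \<longrightarrow> f (m * n) = f m * h n + f n * h m)"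

definition gen_mangoldt :: "(nat \<Rightarrow> complex) \<Rightarrow> (nat \<Rightarrow> complex) \<Rightarrow> nat \<Rightarrow> complex" where
  "gen_mangoldt f h n =
     (if \<exists>p k. prime p \<and> k \<ge> 1 \<and> n = p ^ k
      then f (THE p. prime p \<and> (\<exists>k\<ge>1. n = p ^ k)) / h (THE p. prime p \<and> (\<exists>k\<ge>1. n = p ^ k))
      else 0)"

definition moebius :: "nat \<Rightarrow> complex" where
  "moebius n = (if n \<ge> 1 \<and> squarefree n then (-1) ^ card (prime_factors n) else 0)"

end

theory Submission imports Defs begin

lemma pf_prod_primes:
  assumes "finite T" "\<And>p. p \<in> T \<Longrightarrow> prime (p::nat)"
  shows "prime_factors (\<Prod>T) = T"
proof -
  have "prime_factors (\<Prod>T) = \<Union>((prime_factors \<circ> (\<lambda>x. x)) ` T)"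
    using assms by (intro prime_factors_prod) (auto dest: prime_gt_0_nat)
  also have "\<dots> = T" using assms by (auto simp: prime_prime_factors)
  finally show ?thesis .
qed

lemma sqfree_prod_primes:
  assumes "finite T" "\<And>p. p \<in> T \<Longrightarrow> prime (p::nat)"
  shows "squarefree (\<Prod>T)"
  using assms by (intro squarefree_prod_coprime) (auto simp: primes_coprime squarefree_prime)

lemma sqfree_eq_prod:
  assumes "squarefree (d::nat)"
  shows "d = \<Prod>(prime_factors d)"
proof -
  have d0: "d > 0" using assms by (cases d) auto
  have "d = (\<Prod>p \<in> prime_factors d. p ^ multiplicity p d)" using prime_factorization_nat[OF d0] .
  also have "\<dots> = \<Prod>(prime_factors d)"
    using assms d0 by (intro prod.cong) (auto simp: squarefree_factorial_semiring')
  finally show ?thesis .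
qed

lemma prod_sub_dvd:
  assumes "n > (0::nat)" "T \<subseteq> prime_factors n"
  shows "\<Prod>T dvd n"
proof -
  have "\<Prod>T dvd (\<Prod>p \<in> prime_factors n. p ^ multiplicity p n)"
    proof (rule prod_dvd_prod_subset2)
    fix p assume "p \<in> T"
    hence "multiplicity p n > 0" using assms by (auto simp: prime_factors_multiplicity)
    thus "p dvd p ^ multiplicity p n" by (simp add: dvd_power)
  qed (use assms in auto)
  thus ?thesis using prime_factorization_nat[OF assms(1)] by simp
qed

lemma reindex:
  fixes F :: "nat \<Rightarrow> complex"
  assumes "n \<ge> 1"
  shows "(\<Sum>d | d dvd n. moebius d * F d) = (\<Sum>T \<in> Pow (prime_factors n). (-1) ^ card T * F (\<Prod>T))"
proof -
  have fin: "finite {d. d dvd n}" using assms by auto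
  have "(\<Sum>d | d dvd n. moebius d * F d) = (\<Sum>d | d dvd n \<and> squarefree d. moebius d * F d)"
    using fin by (intro sum.mono_neutral_right) (auto simp: moebius_def)
  also have "\<dots> = (\<Sum>T \<in> Pow (prime_factors n). moebius (\<Prod>T) * F (\<Prod>T))"
  proof (rule sum.reindex_bij_betw[symmetric])
    show "bij_betw Prod (Pow (prime_factors n)) {d. d dvd n \<and> squarefree d}"
    proof (rule bij_betw_byWitness[where f' = prime_factors])
      show "\<forall>T\<in>Pow (prime_factors n). prime_factors (\<Prod>T) = T"
        by (auto intro!: pf_prod_primes intro: finite_subset)
      show "\<forall>d\<in>{d. d dvd n \<and> squarefree d}. \<Prod>(prime_factors d) = d"
        using sqfree_eq_prod by auto
      show "Prod ` Pow (prime_factors n) \<subseteq> {d. d dvd n \<and> squarefree d}"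
        using assms by (auto intro!: sqfree_prod_primes prod_sub_dvd intro: finite_subset)
      show "prime_factors ` {d. d dvd n \<and> squarefree d} \<subseteq> Pow (prime_factors n)"
        using assms dvd_prime_factors[of n] by auto
    qed
  qed
  also have "\<dots> = (\<Sum>T \<in> Pow (prime_factors n). (-1) ^ card T * F (\<Prod>T))"
  proof (intro sum.cong refl)
    fix T assume T: "T \<in> Pow (prime_factors n)"
    hence fT: "finite T" and pT: "\<And>p. p \<in> T \<Longrightarrow> prime p" by (auto intro: finite_subset)
    have "\<Prod>T \<ge> 1" proof -
      have "\<Prod>T > 0" using pT by (intro prod_pos) (auto intro: prime_gt_0_nat)
      thus ?thesis by simp
    qed
    thus "moebius (\<Prod>T) * F (\<Prod>T) = (-1) ^ card T * F (\<Prod>T)"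
      using pf_prod_primes[OF fT pT] sqfree_prod_primes[OF fT pT] by (simp add: moebius_def)
  qed
  finally show ?thesis .
qed

lemma Pow_insert_sum:
  fixes \<phi> :: "nat set \<Rightarrow> complex"
  assumes "finite P" "x \<notin> P"
  shows "(\<Sum>T\<in>Pow (insert x P). \<phi> T) = (\<Sum>T\<in>Pow P. \<phi> T) + (\<Sum>T\<in>Pow P. \<phi> (insert x T))"
proof -
  have "(\<Sum>T\<in>Pow (insert x P). \<phi> T) = (\<Sum>T\<in>Pow P \<union> insert x ` Pow P. \<phi> T)"
    by (simp add: Pow_insert)
  also have "\<dots> = (\<Sum>T\<in>Pow P. \<phi> T) + (\<Sum>T\<in>insert x ` Pow P. \<phi> T)"
    using assms by (intro sum.union_disjoint) auto
  also have "(\<Sum>T\<in>insert x ` Pow P. \<phi> T) = (\<Sum>T\<in>Pow P. \<phi> (insert x T))"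
  proof (rule sum.reindex[unfolded comp_def])
    show "inj_on (insert x) (Pow P)" unfolding inj_on_def
    proof (intro ballI impI)
      fix A B assume "A \<in> Pow P" "B \<in> Pow P" "insert x A = insert x B"
      hence "x \<notin> A" "x \<notin> B" using assms by auto
      thus "A = B" using \<open>insert x A = insert x B\<close> by (metis Diff_insert_absorb)
    qed
  qed
  finally show ?thesis .
qed

lemma E_sum:
  assumes "finite (P::nat set)"
  shows "(\<Sum>T\<in>Pow P. (-1::complex) ^ card T) = (if P = {} then 1 else 0)"
  using assms
proof (induction P rule: finite_induct)
  case (insert x P)
  have "(\<Sum>T\<in>Pow (insert x P). (-1::complex) ^ card T) =
     (\<Sum>T\<in>Pow P. (-1::complex) ^ card T) + (\<Sum>T\<in>Pow P. (-1) ^ card (insert x T))"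
    using insert by (intro Pow_insert_sum) auto
  also have "(\<Sum>T\<in>Pow P. (-1::complex) ^ card (insert x T)) = (\<Sum>T\<in>Pow P. - ((-1) ^ card T))"
  proof (intro sum.cong refl)
    fix T assume "T \<in> Pow P"
    hence "finite T" "x \<notin> T" using insert by (auto intro: finite_subset)
    thus "(-1::complex) ^ card (insert x T) = - ((-1) ^ card T)" by simp
  qed
  finally show ?case by (simp add: sum_negf)
qed simp

lemma S_sum:
  fixes G :: "nat \<Rightarrow> complex"
  assumes "finite (P::nat set)"
  shows "(\<Sum>T\<in>Pow P. (-1) ^ card T * (\<Sum>p\<in>T. G p)) = (if \<exists>p. P = {p} then - G (the_elem P) else 0)"
  using assms
proof (induction P rule: finite_induct)
  case (insert x P)
  have "(\<Sum>T\<in>Pow (insert x P). (-1) ^ card T * (\<Sum>p\<in>T. G p)) =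
     (\<Sum>T\<in>Pow P. (-1) ^ card T * (\<Sum>p\<in>T. G p)) + (\<Sum>T\<in>Pow P. (-1) ^ card (insert x T) * (\<Sum>p\<in>insert x T. G p))"
    using insert by (intro Pow_insert_sum) auto
  also have "(\<Sum>T\<in>Pow P. (-1) ^ card (insert x T) * (\<Sum>p\<in>insert x T. G p)) =
     (\<Sum>T\<in>Pow P. - ((-1) ^ card T * (\<Sum>p\<in>T. G p)) - G x * (-1) ^ card T)"
  proof (intro sum.cong refl)
    fix T assume "T \<in> Pow P"
    hence "finite T" "x \<notin> T" using insert by (auto intro: finite_subset)
    thus "(-1) ^ card (insert x T) * (\<Sum>p\<in>insert x T. G p) = - ((-1) ^ card T * (\<Sum>p\<in>T. G p)) - G x * (-1) ^ card T"
      by (simp add: algebra_simps)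
  qed
  also have "\<dots> = - (\<Sum>T\<in>Pow P. (-1) ^ card T * (\<Sum>p\<in>T. G p)) - G x * (\<Sum>T\<in>Pow P. (-1) ^ card T)"
    by (simp add: sum_subtractf sum_negf sum_distrib_left)
  finally show ?case using E_sum[OF insert(1)] insert(2) by auto
qed simp

lemma div_div_self_nat:
  assumes "d dvd (n::nat)" "n > 0"
  shows "n div (n div d) = d"
proof -
  obtain k where k: "n = d * k" using assms(1) by blast
  hence "d > 0" "k > 0" using assms(2) by auto
  thus ?thesis using k by simp
qed

lemma prime_power_pf:
  assumes "prime (p::nat)" "k \<ge> 1"
  shows "prime_factors (p ^ k) = {p}"
  using assms by (simp add: prime_factorization_prime_power)

theorem theorem3p2:
  fixes f h :: "nat \<Rightarrow> complex" and n :: nat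
  assumes "L_additive_with f h"
    and "\<And>m. m \<ge> 1 \<Longrightarrow> h m \<noteq> 0"
    and "n \<ge> 1"
  shows "gen_mangoldt f h n = (\<Sum>d | d dvd n. moebius (n div d) * (f d / h d)) \<and>
         gen_mangoldt f h n = - (\<Sum>d | d dvd n. moebius d * f d / h d)"
proof -
  define g where "g = (\<lambda>m. f m / h m)"
  have cm: "completely_multiplicative h" and fa: "\<And>a b. a \<ge> 1 \<Longrightarrow> b \<ge> 1 \<Longrightarrow> f (a*b) = f a * h b + f b * h a"
    using assms(1) unfolding L_additive_with_def by auto
  have h1: "h 1 = 1" and hm: "\<And>a b. a \<ge> 1 \<Longrightarrow> b \<ge> 1 \<Longrightarrow> h (a*b) = h a * h b"
    using cm unfolding completely_multiplicative_def by auto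
  have gm: "g (a*b) = g a + g b" if "a \<ge> 1" "b \<ge> 1" for a b
    using fa[OF that] hm[OF that] assms(2)[OF that(1)] assms(2)[OF that(2)]
    by (simp add: g_def field_simps)
  have g1: "g 1 = 0" using gm[of 1 1] by simp
  hence g1': "g (Suc 0) = 0" by simp
  have gprod: "g (\<Prod>T) = (\<Sum>p\<in>T. g p)" if "finite T" "\<And>p. p \<in> T \<Longrightarrow> prime p" for T
    using that
  proof (induction T rule: finite_induct)
    case (insert x T)
    have "\<Prod>T > 0" using insert by (intro prod_pos) (auto intro: prime_gt_0_nat)
    moreover have "prime x" using insert.prems by simp
    hence "x \<ge> 1" using prime_gt_0_nat by (simp add: Suc_le_eq)
    ultimately have "g (x * \<Prod>T) = g x + g (\<Prod>T)" using gm[of x "\<Prod>T"] by simp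
    moreover have "g (\<Prod>T) = (\<Sum>p\<in>T. g p)" using insert.IH insert.prems by simp
    ultimately show ?case using insert.hyps by simp
  qed (simp add: g1')
  define P where "P = prime_factors n"
  have finP: "finite P" by (simp add: P_def)
  have primeP: "\<And>p. p \<in> P \<Longrightarrow> prime p" by (auto simp: P_def in_prime_factors_iff)
  have n0: "n > 0" using assms(3) by simp
  have L: "gen_mangoldt f h n = (if \<exists>p. P = {p} then g (the_elem P) else 0)"
  proof (cases "\<exists>p. P = {p}")
    case True
    then obtain p where Pp: "P = {p}" by blast
    have pp: "prime p" using primeP Pp by auto
    define k where "k = multiplicity p n"
    have k1: "k \<ge> 1" using Pp n0 by (auto simp: P_def k_def prime_factors_multiplicity)
    have "n = (\<Prod>q \<in> P. q ^ multiplicity q n)" using prime_factorization_nat[OF n0] by (simp add: P_def)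
    hence np: "n = p ^ k" using Pp by (simp add: k_def)
    have ex: "\<exists>p k. prime p \<and> k \<ge> 1 \<and> n = p ^ k" using pp k1 np by blast
    have th: "(THE q. prime q \<and> (\<exists>k\<ge>1. n = q ^ k)) = p"
    proof (rule the_equality)
      show "prime p \<and> (\<exists>k\<ge>1. n = p ^ k)" using pp k1 np by blast
    next
      fix q assume "prime q \<and> (\<exists>k\<ge>1. n = q ^ k)"
      then obtain j where "prime q" "j \<ge> 1" "n = q ^ j" by blast
      hence "P = {q}" using prime_power_pf by (simp add: P_def)
      thus "q = p" using Pp by simp
    qed
    show ?thesis using True Pp ex th by (simp add: gen_mangoldt_def g_def)
  next
    case False
    have "\<not> (\<exists>p k. prime p \<and> k \<ge> 1 \<and> n = p ^ k)"
      using False prime_power_pf by (auto simp: P_def)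
    hence "gen_mangoldt f h n = 0" unfolding gen_mangoldt_def by (rule if_not_P)
    thus ?thesis using False by simp
  qed
  have second: "(\<Sum>d | d dvd n. moebius d * g d) = - gen_mangoldt f h n"
  proof -
    have "(\<Sum>d | d dvd n. moebius d * g d) = (\<Sum>T \<in> Pow P. (-1) ^ card T * g (\<Prod>T))"
      using reindex[OF assms(3)] by (simp add: P_def)
    also have "\<dots> = (\<Sum>T \<in> Pow P. (-1) ^ card T * (\<Sum>p\<in>T. g p))"
    proof (intro sum.cong refl)
      fix T assume "T \<in> Pow P"
      hence "finite T" "\<And>p. p \<in> T \<Longrightarrow> prime p" using finP primeP by (auto intro: finite_subset)
      thus "(-1) ^ card T * g (\<Prod>T) = (-1) ^ card T * (\<Sum>p\<in>T. g p)" using gprod by simp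
    qed
    also have "\<dots> = - gen_mangoldt f h n" using S_sum[OF finP, of g] L by simp
    finally show ?thesis .
  qed
  have musum: "(\<Sum>d | d dvd n. moebius d) = (if n = 1 then 1 else 0)"
  proof -
    have "(\<Sum>d | d dvd n. moebius d) = (\<Sum>d | d dvd n. moebius d * 1)" by simp
    also have "\<dots> = (\<Sum>T \<in> Pow P. (-1) ^ card T * 1)"
      using reindex[OF assms(3), of "\<lambda>_. 1"] by (simp add: P_def)
    also have "\<dots> = (if P = {} then 1 else 0)" using E_sum[OF finP] by simp
    also have "(P = {}) = (n = 1)" using n0 by (auto simp: P_def prime_factorization_empty_iff)
    finally show ?thesis .
  qed
  have first: "(\<Sum>d | d dvd n. moebius (n div d) * g d) = gen_mangoldt f h n"
  proof -
    have "(\<Sum>d | d dvd n. moebius (n div d) * g d) = (\<Sum>d | d dvd n. moebius d * g (n div d))"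
    proof -
      have bij: "bij_betw (\<lambda>d. n div d) {d. d dvd n} {d. d dvd n}"
        by (rule bij_betw_byWitness[where f' = "\<lambda>d. n div d"]) (auto simp: n0 div_div_self_nat)
      have "(\<Sum>d | d dvd n. moebius (n div d) * g (n div (n div d))) = (\<Sum>d | d dvd n. moebius d * g (n div d))"
        using sum.reindex_bij_betw[OF bij, of "\<lambda>d. moebius d * g (n div d)"] by simp
      moreover have "(\<Sum>d | d dvd n. moebius (n div d) * g (n div (n div d))) = (\<Sum>d | d dvd n. moebius (n div d) * g d)"
        by (intro sum.cong refl) (auto simp: n0 div_div_self_nat)
      ultimately show ?thesis by simp
    qed
    also have "\<dots> = (\<Sum>d | d dvd n. moebius d * (g n - g d))"
    proof (intro sum.cong refl)
      fix d assume "d \<in> {d. d dvd n}"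
      hence d: "d dvd n" by simp
      then obtain k where k: "n = d * k" by blast
      hence "d > 0" "k > 0" using n0 by auto
      hence "d \<ge> 1" "n div d \<ge> 1" using k by auto
      hence "g n = g d + g (n div d)" using gm[of d "n div d"] d by simp
      thus "moebius d * g (n div d) = moebius d * (g n - g d)" by simp
    qed
    also have "\<dots> = g n * (\<Sum>d | d dvd n. moebius d) - (\<Sum>d | d dvd n. moebius d * g d)"
      by (simp add: algebra_simps sum_subtractf sum_distrib_left)
    also have "\<dots> = gen_mangoldt f h n" using musum second g1 by auto
    finally show ?thesis .
  qed
  show ?thesis using first second by (simp add: g_def)
qed

end
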